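(* Let $q\ge1$ and let $\mathcal{T}_q=(\tau_1,\ldots,\tau_q)$ be the permutation ideal in $S_{\mathcal{T}}$. Then (a) $\mathcal{T}_q$ is minimally generated by $\{\tau_1,\ldots,\tau_q\}$; (b) $\mathcal{T}_q^{\,2}$ is minimally generated by $\{\tau_i\tau_j:1\le i\le j\le q\}$, and in particular the minimal generating set of $\mathcal{T}_q^{\,2}$ has exactly $\binom{q}{2}+q$ elements.
   Context: Let $S_q$ be the symmetric group on $[q]=\{1,\ldots,q\}$; for $\sigma=i_1\cdots i_q$ in one-line notation, $\sigma(j)=i_j$. Let $K$ be a field, $S_{\mathcal{T}}=K[x_\sigma:\sigma\in S_q]$, $\tau_i=\prod_{\sigma\in S_q}x_\sigma^{\sigma(i)}$ for $i\in[q]$, and $\mathcal{T}_q=(\tau_1,\ldots,\tau_q)$ (the permutation ideal). *)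

theory Defs
  imports "HOL-Library.Poly_Mapping" "HOL-Combinatorics.Permutations"
begin

text \<open>Monomials in variables x_sigma are finitely supported exponent maps (nat=>nat) =>0 nat;
polynomials over the field 'k are finitely supported coefficient maps on monomials,
with convolution product (HOL-Library.Poly_Mapping).\<close>

type_synonym 'k perm_poly = "((nat \<Rightarrow> nat) \<Rightarrow>\<^sub>0 nat) \<Rightarrow>\<^sub>0 'k"

definition Sq :: "nat \<Rightarrow> (nat \<Rightarrow> nat) set" where
  "Sq q = {\<sigma>. \<sigma> permutes {1..q}}"

definition ST :: "nat \<Rightarrow> 'k::field perm_poly set" where
  "ST q = {p :: 'k perm_poly. \<forall>m\<in>Poly_Mapping.keys p. Poly_Mapping.keys m \<subseteq> Sq q}"

definition tau :: "nat \<Rightarrow> nat \<Rightarrow> 'k::field perm_poly" where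
  "tau q i = Poly_Mapping.single (\<Sum>\<sigma>\<in>Sq q. Poly_Mapping.single \<sigma> (\<sigma> i)) 1"

definition ideal_gen :: "nat \<Rightarrow> 'k::field perm_poly set \<Rightarrow> 'k perm_poly set" where
  "ideal_gen q G = {(\<Sum>g\<in>F. r g * g) | F r. finite F \<and> F \<subseteq> G \<and> (\<forall>g\<in>F. r g \<in> ST q)}"

definition ideal_mult :: "nat \<Rightarrow> 'k::field perm_poly set \<Rightarrow> 'k perm_poly set \<Rightarrow> 'k perm_poly set" where
  "ideal_mult q I J = ideal_gen q {a * b | a b. a \<in> I \<and> b \<in> J}"

definition perm_ideal :: "nat \<Rightarrow> 'k::field perm_poly set" where
  "perm_ideal q = ideal_gen q (tau q ` {1..q})"

definition minimally_generates :: "nat \<Rightarrow> 'k::field perm_poly set \<Rightarrow> 'k perm_poly set \<Rightarrow> bool" where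
  "minimally_generates q G I \<longleftrightarrow>
     G \<subseteq> ST q \<and> ideal_gen q G = I \<and> (\<forall>H. H \<subset> G \<longrightarrow> ideal_gen q H \<noteq> I)"

end

theory Submission
  imports Defs
begin




lemma ST_0: "0 \<in> ST q" by (simp add: ST_def)
lemma ST_1: "1 \<in> ST q" by (simp add: ST_def)
lemma ST_add: fixes a b :: "'k::field perm_poly" assumes "a \<in> ST q" "b \<in> ST q" shows "a + b \<in> ST q"
proof -
  have "Poly_Mapping.keys (a + b) \<subseteq> Poly_Mapping.keys a \<union> Poly_Mapping.keys b" by (rule keys_add)
  then show ?thesis using assms unfolding ST_def by auto
qed

lemma ST_mult: fixes a b :: "'k::field perm_poly" assumes "a \<in> ST q" "b \<in> ST q" shows "a * b \<in> ST q"
proof -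
  have "\<forall>m::(nat\<Rightarrow>nat)\<Rightarrow>\<^sub>0nat\<in>Poly_Mapping.keys (a*b). Poly_Mapping.keys m \<subseteq> Sq q"
  proof
    fix m assume "m \<in> Poly_Mapping.keys (a*b)"
    then obtain x y where "m = x + y" "x \<in> Poly_Mapping.keys a" "y \<in> Poly_Mapping.keys b" using keys_mult[of a b] by blast
    then have "Poly_Mapping.keys x \<subseteq> Sq q" "Poly_Mapping.keys y \<subseteq> Sq q"
      using assms unfolding ST_def by auto
    then show "Poly_Mapping.keys m \<subseteq> Sq q" using \<open>m = x + y\<close> keys_add[of x y] by auto
  qed
  then show ?thesis by (simp add: ST_def)
qed

lemma ig_0: "0 \<in> ideal_gen q G"
  unfolding ideal_gen_def by (intro CollectI exI[of _ "{}"] exI[of _ "\<lambda>_. 0"]) simp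

lemma ig_gen: "g \<in> G \<Longrightarrow> g \<in> ideal_gen q G"
  unfolding ideal_gen_def
  by (rule CollectI, rule exI[of _ "{g}"], rule exI[of _ "\<lambda>_. 1"], auto simp: ST_1)

lemma ig_add: assumes "x \<in> ideal_gen q G" "y \<in> ideal_gen q G" shows "x + y \<in> ideal_gen q G"
proof -
  obtain F1 r1 where 1: "x = (\<Sum>g\<in>F1. r1 g * g)" "finite F1" "F1 \<subseteq> G" "\<forall>g\<in>F1. r1 g \<in> ST q"
    using assms(1) unfolding ideal_gen_def by blast
  obtain F2 r2 where 2: "y = (\<Sum>g\<in>F2. r2 g * g)" "finite F2" "F2 \<subseteq> G" "\<forall>g\<in>F2. r2 g \<in> ST q"
    using assms(2) unfolding ideal_gen_def by blast
  define r where "r g = (if g \<in> F1 then r1 g else 0) + (if g \<in> F2 then r2 g else 0)" for g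
  have "(\<Sum>g\<in>F1 \<union> F2. r g * g) = (\<Sum>g\<in>F1 \<union> F2. (if g \<in> F1 then r1 g * g else 0))
      + (\<Sum>g\<in>F1 \<union> F2. (if g \<in> F2 then r2 g * g else 0))"
    unfolding sum.distrib[symmetric] by (rule sum.cong) (auto simp: r_def distrib_right)
  also have "\<dots> = x + y"
  proof -
    have "(\<Sum>g\<in>F1 \<union> F2. (if g \<in> F1 then r1 g * g else 0)) = (\<Sum>g\<in>F1. r1 g * g)"
      by (rule sum.mono_neutral_cong_right) (use 1 2 in auto)
    moreover have "(\<Sum>g\<in>F1 \<union> F2. (if g \<in> F2 then r2 g * g else 0)) = (\<Sum>g\<in>F2. r2 g * g)"
      by (rule sum.mono_neutral_cong_right) (use 1 2 in auto)
    ultimately show ?thesis using 1 2 by simp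
  qed
  finally have e: "x + y = (\<Sum>g\<in>F1 \<union> F2. r g * g)" by simp
  show ?thesis unfolding ideal_gen_def
    apply (rule CollectI, rule exI[of _ "F1 \<union> F2"], rule exI[of _ r])
    using 1 2 e by (auto simp: r_def ST_add ST_0)
qed

lemma ig_smult: assumes "x \<in> ideal_gen q G" "c \<in> ST q" shows "c * x \<in> ideal_gen q G"
proof -
  obtain F1 r1 where 1: "x = (\<Sum>g\<in>F1. r1 g * g)" "finite F1" "F1 \<subseteq> G" "\<forall>g\<in>F1. r1 g \<in> ST q"
    using assms(1) unfolding ideal_gen_def by blast
  have "c * x = (\<Sum>g\<in>F1. (c * r1 g) * g)" using 1 by (simp add: sum_distrib_left mult.assoc)
  then show ?thesis unfolding ideal_gen_def
    apply (intro CollectI exI[of _ "F1"] exI[of _ "\<lambda>g. c * r1 g"])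
    using 1 assms(2) by (auto simp: ST_mult)
qed

lemma ig_sum: "finite A \<Longrightarrow> (\<And>a. a \<in> A \<Longrightarrow> f a \<in> ideal_gen q G) \<Longrightarrow> sum f A \<in> ideal_gen q G"
  by (induction A rule: finite_induct) (auto simp: ig_0 ig_add)

lemma ig_mono: "G \<subseteq> H \<Longrightarrow> ideal_gen q G \<subseteq> ideal_gen q H"
  unfolding ideal_gen_def by blast

lemma ig_sub: assumes "G \<subseteq> ideal_gen q H" shows "ideal_gen q G \<subseteq> ideal_gen q H"
proof
  fix x assume "x \<in> ideal_gen q G"
  then obtain F1 r1 where 1: "x = (\<Sum>g\<in>F1. r1 g * g)" "finite F1" "F1 \<subseteq> G" "\<forall>g\<in>F1. r1 g \<in> ST q"
    unfolding ideal_gen_def by blast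
  show "x \<in> ideal_gen q H" unfolding 1(1)
    by (rule ig_sum) (use 1 assms in \<open>auto intro!: ig_smult\<close>)
qed






lemma Sq_range: "\<sigma> \<in> Sq q \<Longrightarrow> x \<in> {1..q} \<Longrightarrow> \<sigma> x \<in> {1..q}"
  unfolding Sq_def using permutes_in_image[of \<sigma> "{1..q}" x] by blast

lemma Sq_inj: "\<sigma> \<in> Sq q \<Longrightarrow> \<sigma> x = \<sigma> y \<Longrightarrow> x = y"
  unfolding Sq_def using permutes_inj[of \<sigma> "{1..q}"] by (auto simp: inj_def)

lemma Sq_other: assumes "\<sigma> \<in> Sq q" "x \<in> {1..q}" "\<sigma> i = q" "x \<noteq> i" shows "\<sigma> x \<le> q - 1"
proof -
  have "\<sigma> x \<noteq> q" using Sq_inj[OF assms(1)] assms(3,4) by metis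
  then show ?thesis using Sq_range[OF assms(1,2)] by auto
qed

lemma constr: assumes "i \<in> {1..q}" "j \<in> {1..q}" shows "\<exists>\<sigma>\<in>Sq q. \<sigma> i = q \<and> q - 1 \<le> \<sigma> j"
proof (cases "i = j")
  case True
  have "transpose i q permutes {1..q}" using assms by (intro permutes_swap_id) auto
  then show ?thesis using True by (intro bexI[of _ "transpose i q"]) (auto simp: Sq_def)
next
  case False
  define s1 where "s1 = transpose i q"
  have p1: "s1 permutes {1..q}" unfolding s1_def using assms by (intro permutes_swap_id) auto
  have "s1 j \<in> {1..q}" using p1 assms permutes_in_image[of s1 "{1..q}" j] by blast
  moreover have "q \<ge> 2" using assms False by auto
  ultimately have p2: "transpose (s1 j) (q - 1) permutes {1..q}" by (intro permutes_swap_id) auto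
  have s1i: "s1 i = q" unfolding s1_def by simp
  have "s1 j \<noteq> q" using False s1i p1 permutes_inj[of s1 "{1..q}"] by (metis injD)
  then have "(transpose (s1 j) (q - 1) \<circ> s1) i = q" using s1i \<open>q \<ge> 2\<close>
    by (auto simp: transpose_def)
  moreover have "(transpose (s1 j) (q - 1) \<circ> s1) j = q - 1" by (simp add: transpose_def)
  moreover have "transpose (s1 j) (q - 1) \<circ> s1 \<in> Sq q" unfolding Sq_def using p1 p2 permutes_compose by blast
  ultimately show ?thesis by (intro bexI[of _ "transpose (s1 j) (q - 1) \<circ> s1"]) auto
qed

lemma key1: assumes "i \<in> {1..q}" "j \<in> {1..q}" "k \<in> {1..q}" "l \<in> {1..q}" "i \<noteq> k" "i \<noteq> l"
  shows "\<exists>\<sigma>\<in>Sq q. \<sigma> k + \<sigma> l < \<sigma> i + \<sigma> j"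
proof -
  obtain \<sigma> where s: "\<sigma> \<in> Sq q" "\<sigma> i = q" "q - 1 \<le> \<sigma> j" using constr assms by blast
  have "\<sigma> k \<le> q - 1" "\<sigma> l \<le> q - 1" using Sq_other[OF s(1) _ s(2)] assms by auto
  moreover have "q \<ge> 1" using assms by auto
  ultimately show ?thesis using s by (intro bexI[of _ \<sigma>]) auto
qed

lemma key: assumes "i \<in> {1..q}" "j \<in> {1..q}" "k \<in> {1..q}" "l \<in> {1..q}"
  "\<not> ((i = k \<and> j = l) \<or> (i = l \<and> j = k))"
  shows "\<exists>\<sigma>\<in>Sq q. \<sigma> k + \<sigma> l < \<sigma> i + \<sigma> j"
proof -
  consider "i \<noteq> k \<and> i \<noteq> l" | "j \<noteq> k \<and> j \<noteq> l" | "i = j \<and> i = k \<and> l \<noteq> i" | "i = j \<and> i = l \<and> k \<noteq> i"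
    using assms(5) by blast
  then show ?thesis
  proof cases
    case 1 then show ?thesis using key1[of i q j k l] assms by auto
  next
    case 2 then show ?thesis using key1[of j q i k l] assms by (auto simp: add.commute)
  next
    case 3
    obtain \<sigma> where s: "\<sigma> \<in> Sq q" "\<sigma> i = q" using constr assms by blast
    have "\<sigma> l \<le> q - 1" using Sq_other[OF s(1) _ s(2)] assms 3 by auto
    moreover have "q \<ge> 1" using assms by auto
    ultimately show ?thesis using s 3 by (intro bexI[of _ \<sigma>]) auto
  next
    case 4
    obtain \<sigma> where s: "\<sigma> \<in> Sq q" "\<sigma> i = q" using constr assms by blast
    have "\<sigma> k \<le> q - 1" using Sq_other[OF s(1) _ s(2)] assms 4 by auto
    moreover have "q \<ge> 1" using assms by auto
    ultimately show ?thesis using s 4 by (intro bexI[of _ \<sigma>]) auto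
  qed
qed





definition mon :: "nat \<Rightarrow> nat \<Rightarrow> (nat \<Rightarrow> nat) \<Rightarrow>\<^sub>0 nat" where
  "mon q i = (\<Sum>\<sigma>\<in>Sq q. Poly_Mapping.single \<sigma> (\<sigma> i))"

lemma tau_mon: "tau q i = Poly_Mapping.single (mon q i) 1"
  by (simp add: tau_def mon_def)

lemma finite_Sq: "finite (Sq q)"
  unfolding Sq_def using finite_permutations[of "{1..q}"] by simp

lemma lookup_mon: "\<sigma> \<in> Sq q \<Longrightarrow> Poly_Mapping.lookup (mon q i) \<sigma> = \<sigma> i"
  unfolding mon_def lookup_sum lookup_single using finite_Sq[of q]
  by (simp add: when_def)

lemma tau_ST: "tau q i \<in> ST q"
proof -
  have "Poly_Mapping.keys (mon q i) \<subseteq> Sq q"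
    unfolding mon_def using keys_sum[of "\<lambda>\<sigma>. Poly_Mapping.single \<sigma> (\<sigma> i)" "Sq q"]
    by (auto split: if_splits)
  then show ?thesis unfolding ST_def tau_mon by simp
qed

lemma tau_mult: "tau q i * tau q j = Poly_Mapping.single (mon q i + mon q j) 1"
  by (simp add: tau_mon mult_single)

lemma single1_inj: "Poly_Mapping.single a (1::'k::field) = Poly_Mapping.single b 1 \<Longrightarrow> a = b"
  by (metis keys_single one_neq_zero singleton_inject)

lemma div_lemma:
  assumes "H \<subseteq> (\<lambda>t. Poly_Mapping.single t (1::'k::field)) ` T"
    "Poly_Mapping.single m 1 \<in> ideal_gen q H"
  shows "\<exists>t\<in>T. Poly_Mapping.single t 1 \<in> H \<and> (\<exists>a. m = a + t)"
proof -
  obtain F r where 1: "Poly_Mapping.single m 1 = (\<Sum>g\<in>F. r g * g)" "finite F" "F \<subseteq> H"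
    using assms(2) unfolding ideal_gen_def by blast
  have "m \<in> Poly_Mapping.keys (Poly_Mapping.single m (1::'k))" by simp
  then have "m \<in> (\<Union>g\<in>F. Poly_Mapping.keys (r g * g))" using 1(1) keys_sum[of "\<lambda>g. r g * g" F] by auto
  then obtain g where g: "g \<in> F" "m \<in> Poly_Mapping.keys (r g * g)" by blast
  then obtain t where t: "t \<in> T" "g = Poly_Mapping.single t 1" using 1(3) assms(1) by blast
  obtain a b where "m = a + b" "b \<in> Poly_Mapping.keys g" using g(2) keys_mult[of "r g" g] by blast
  then have "m = a + t" using t by simp
  then show ?thesis using t g 1(3) by blast
qed

lemma mon_le: fixes m a t :: "(nat \<Rightarrow> nat) \<Rightarrow>\<^sub>0 nat" shows "m = a + t \<Longrightarrow> Poly_Mapping.lookup t \<sigma> \<le> Poly_Mapping.lookup m \<sigma>"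
  by (simp add: lookup_add)

lemma card_pairs: "card {(i, j). 1 \<le> i \<and> i \<le> j \<and> j \<le> (q::nat)} = (q choose 2) + q"
proof (induction q)
  case 0
  have "{(i, j). 1 \<le> i \<and> i \<le> j \<and> j \<le> (0::nat)} = {}" by auto
  then show ?case by (simp only: card.empty) simp
next
  case (Suc q)
  have e: "{(i, j). 1 \<le> i \<and> i \<le> j \<and> j \<le> Suc q} =
     {(i, j). 1 \<le> i \<and> i \<le> j \<and> j \<le> q} \<union> (\<lambda>i. (i, Suc q)) ` {1..Suc q}" by auto
  have f: "finite {(i, j). 1 \<le> i \<and> i \<le> j \<and> j \<le> (q::nat)}"
    by (rule finite_subset[of _ "{1..q} \<times> {1..q}"]) auto
  have "card {(i, j). 1 \<le> i \<and> i \<le> j \<and> j \<le> Suc q} = card {(i, j). 1 \<le> i \<and> i \<le> j \<and> j \<le> q} + card ((\<lambda>i. (i, Suc q)) ` {1..Suc q})"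
    unfolding e by (rule card_Un_disjoint) (use f in auto)
  also have "card ((\<lambda>i. (i, Suc q)) ` {1..Suc q}) = Suc q"
    by (subst card_image) (auto simp: inj_on_def)
  moreover have "Suc q choose 2 = q + (q choose 2)" using binomial_Suc_Suc[of q 1] by (simp add: numeral_2_eq_2)
  ultimately show ?case using Suc by simp
qed





lemma part_a: assumes "q \<ge> 1"
  shows "minimally_generates q (tau q ` {1..q}) (perm_ideal q :: 'k::field perm_poly set)"
  unfolding minimally_generates_def
proof (intro conjI allI impI)
  show "tau q ` {1..q} \<subseteq> ST q" using tau_ST by blast
  show "ideal_gen q (tau q ` {1..q}) = (perm_ideal q :: 'k perm_poly set)" by (simp add: perm_ideal_def)
  fix H :: "'k perm_poly set" assume H: "H \<subset> tau q ` {1..q}"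
  then obtain k where k: "k \<in> {1..q}" "tau q k \<notin> H" by blast
  show "ideal_gen q H \<noteq> perm_ideal q"
  proof
    assume eq: "ideal_gen q H = perm_ideal q"
    have "tau q k \<in> ideal_gen q H" unfolding eq perm_ideal_def using k by (intro ig_gen) auto
    moreover have "H \<subseteq> (\<lambda>t. Poly_Mapping.single t (1::'k)) ` (mon q ` {1..q})"
      using H by (auto simp: tau_mon)
    ultimately obtain t a where t: "t \<in> mon q ` {1..q}" "Poly_Mapping.single t 1 \<in> H" "mon q k = a + t"
      using div_lemma[of H "mon q ` {1..q}" "mon q k" q] unfolding tau_mon by blast
    then obtain i where i: "i \<in> {1..q}" "t = mon q i" by blast
    have "i \<noteq> k" using k t i by (auto simp: tau_mon)
    then obtain \<sigma> where s: "\<sigma> \<in> Sq q" "\<sigma> k + \<sigma> k < \<sigma> i + \<sigma> i"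
      using key[of i q i k k] i k by auto
    have "Poly_Mapping.lookup t \<sigma> \<le> Poly_Mapping.lookup (mon q k) \<sigma>" using mon_le[OF t(3)] .
    then show False using s i lookup_mon[OF s(1)] by auto
  qed
qed



lemma G2_eq: "{tau q i * tau q j | i j. 1 \<le> i \<and> i \<le> j \<and> j \<le> q} =
   (\<lambda>(i,j). tau q i * tau q j) ` {(i, j). 1 \<le> i \<and> i \<le> j \<and> j \<le> q}"
  by auto

lemma pair_ne: assumes "i \<in> {1..q}" "j \<in> {1..q}" "k \<in> {1..q}" "l \<in> {1..q}"
  "mon q i + mon q j = a + (mon q k + mon q l)"
  shows "(i = k \<and> j = l) \<or> (i = l \<and> j = k)"
proof (rule ccontr)
  assume "\<not> ?thesis"
  then obtain \<sigma> where s: "\<sigma> \<in> Sq q" "\<sigma> i + \<sigma> j < \<sigma> k + \<sigma> l"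
    using key[of k q l i j] assms by auto
  have "Poly_Mapping.lookup (mon q k + mon q l) \<sigma> \<le> Poly_Mapping.lookup (mon q i + mon q j) \<sigma>"
    using mon_le[OF assms(5)] .
  then show False using s lookup_mon[OF s(1)] by (simp add: lookup_add)
qed

lemma part_b: assumes "q \<ge> 1"
  shows "minimally_generates q {tau q i * tau q j | i j. 1 \<le> i \<and> i \<le> j \<and> j \<le> q}
            (ideal_mult q (perm_ideal q) (perm_ideal q) :: 'k::field perm_poly set)"
  unfolding minimally_generates_def
proof (intro conjI allI impI)
  let ?G = "{tau q i * tau q j | i j. 1 \<le> i \<and> i \<le> j \<and> j \<le> q} :: 'k perm_poly set"
  show "?G \<subseteq> ST q"
  proof
    fix x assume "x \<in> ?G"
    then obtain i j where "x = tau q i * tau q j" by blast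
    then show "x \<in> ST q" by (simp add: ST_mult tau_ST)
  qed
  have T: "tau q i \<in> (perm_ideal q :: 'k perm_poly set)" if "i \<in> {1..q}" for i
    unfolding perm_ideal_def using that by (intro ig_gen) auto
  have GP: "tau q i * tau q j \<in> ideal_gen q ?G" if "i \<in> {1..q}" "j \<in> {1..q}" for i j
  proof (cases "i \<le> j")
    case True
    then have "tau q i * tau q j \<in> ?G" using that by auto
    then show ?thesis by (rule ig_gen)
  next
    case False
    have c: "tau q i * tau q j = tau q j * tau q i" by (simp add: mult.commute)
    have "1 \<le> j \<and> j \<le> i \<and> i \<le> q" using that False by auto
    then have "tau q j * tau q i \<in> ?G" by blast
    then have "tau q j * tau q i \<in> ideal_gen q ?G" by (rule ig_gen)
    then show ?thesis unfolding c .
  qed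
  have gb: "g * b \<in> ideal_gen q ?G" if gb_a: "g \<in> tau q ` {1..q}" "b \<in> perm_ideal q" for g b
  proof -
    obtain F s where 1: "b = (\<Sum>h\<in>F. s h * h)" "finite F" "F \<subseteq> tau q ` {1..q}" "\<forall>h\<in>F. s h \<in> ST q"
      using gb_a(2) unfolding perm_ideal_def ideal_gen_def by blast
    have "g * b = (\<Sum>h\<in>F. s h * (g * h))" unfolding 1(1) by (simp add: sum_distrib_left ac_simps)
    also have "\<dots> \<in> ideal_gen q ?G"
    proof (rule ig_sum)
      show "finite F" by (rule 1(2))
      fix h assume h: "h \<in> F"
      obtain i j where "g = tau q i" "h = tau q j" "i \<in> {1..q}" "j \<in> {1..q}" using h 1(3) gb_a(1) by blast
      then have "g * h \<in> ideal_gen q ?G" using GP by simp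
      then show "s h * (g * h) \<in> ideal_gen q ?G" using 1(4) h by (simp add: ig_smult)
    qed
    finally show ?thesis .
  qed
  have ab: "a * b \<in> ideal_gen q ?G" if ab_a: "a \<in> perm_ideal q" "b \<in> perm_ideal q" for a b
  proof -
    obtain F r where 1: "a = (\<Sum>g\<in>F. r g * g)" "finite F" "F \<subseteq> tau q ` {1..q}" "\<forall>g\<in>F. r g \<in> ST q"
      using ab_a(1) unfolding perm_ideal_def ideal_gen_def by blast
    have "a * b = (\<Sum>g\<in>F. r g * (g * b))" unfolding 1(1) sum_distrib_right by (simp add: ac_simps)
    also have "\<dots> \<in> ideal_gen q ?G"
    proof (rule ig_sum)
      show "finite F" by (rule 1(2))
      fix g assume g: "g \<in> F"
      then have "g * b \<in> ideal_gen q ?G" using gb 1(3) ab_a(2) by blast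
      then show "r g * (g * b) \<in> ideal_gen q ?G" using 1(4) g by (simp add: ig_smult)
    qed
    finally show ?thesis .
  qed
  have "?G \<subseteq> {a * b | a b. a \<in> perm_ideal q \<and> b \<in> perm_ideal q}"
  proof
    fix x assume "x \<in> ?G"
    then obtain i j where ij: "x = tau q i * tau q j" "i \<in> {1..q}" "j \<in> {1..q}" by auto
    then have "tau q i \<in> (perm_ideal q :: 'k perm_poly set)" "tau q j \<in> (perm_ideal q :: 'k perm_poly set)" using T by auto
    then show "x \<in> {a * b | a b. a \<in> perm_ideal q \<and> b \<in> perm_ideal q}" using ij(1) by blast
  qed
  then have "ideal_gen q ?G \<subseteq> ideal_mult q (perm_ideal q) (perm_ideal q)"
    unfolding ideal_mult_def by (rule ig_mono)
  moreover have "ideal_mult q (perm_ideal q) (perm_ideal q) \<subseteq> ideal_gen q ?G"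
    unfolding ideal_mult_def using ab by (intro ig_sub) blast
  ultimately show eqI: "ideal_gen q ?G = ideal_mult q (perm_ideal q) (perm_ideal q)" by blast
  fix H :: "'k perm_poly set" assume H: "H \<subset> ?G"
  then obtain x where x: "x \<in> ?G" "x \<notin> H" by blast
  then obtain k l where kl: "x = tau q k * tau q l" "1 \<le> k" "k \<le> l" "l \<le> q" by blast
  then have k: "k \<in> {1..q}" "l \<in> {1..q}" "k \<le> l" "tau q k * tau q l \<notin> H" using x by auto
  show "ideal_gen q H \<noteq> ideal_mult q (perm_ideal q) (perm_ideal q)"
  proof
    assume eq: "ideal_gen q H = ideal_mult q (perm_ideal q) (perm_ideal q)"
    have "tau q k * tau q l \<in> ideal_gen q H" unfolding eq eqI[symmetric] using k by (intro ig_gen) auto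
    moreover have "H \<subseteq> (\<lambda>t. Poly_Mapping.single t (1::'k)) ` {mon q i + mon q j | i j. 1 \<le> i \<and> i \<le> j \<and> j \<le> q}"
    proof
      fix h assume "h \<in> H"
      then have "h \<in> ?G" using H by blast
      then obtain i j where ij: "h = tau q i * tau q j" "1 \<le> i \<and> i \<le> j \<and> j \<le> q" by blast
      then have "mon q i + mon q j \<in> {mon q i + mon q j | i j. 1 \<le> i \<and> i \<le> j \<and> j \<le> q}" by blast
      moreover have "h = Poly_Mapping.single (mon q i + mon q j) 1" using ij(1) by (simp add: tau_mult)
      ultimately show "h \<in> (\<lambda>t. Poly_Mapping.single t (1::'k)) ` {mon q i + mon q j | i j. 1 \<le> i \<and> i \<le> j \<and> j \<le> q}"
        by (rule rev_image_eqI)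
    qed
    ultimately obtain t a where t: "t \<in> {mon q i + mon q j | i j. 1 \<le> i \<and> i \<le> j \<and> j \<le> q}"
      "Poly_Mapping.single t 1 \<in> H" "mon q k + mon q l = a + t"
      using div_lemma[of H _ "mon q k + mon q l" q] unfolding tau_mult by blast
    then obtain i j where ij0: "t = mon q i + mon q j" "1 \<le> i" "i \<le> j" "j \<le> q" by blast
    then have ij: "i \<in> {1..q}" "j \<in> {1..q}" "t = mon q i + mon q j" by auto
    have "(k = i \<and> l = j) \<or> (k = j \<and> l = i)" using pair_ne[of k q l i j a] ij k t by auto
    then have "Poly_Mapping.single t (1::'k) = tau q k * tau q l" using ij by (auto simp: tau_mult add.commute)
    then show False using t(2) k(4) by simp
  qed
qed


lemma part_c: "card ({tau q i * tau q j | i j. 1 \<le> i \<and> i \<le> j \<and> j \<le> q} :: 'k::field perm_poly set)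
            = (q choose 2) + q"
proof -
  have "inj_on (\<lambda>(i,j). tau q i * tau q j :: 'k perm_poly) {(i, j). 1 \<le> i \<and> i \<le> j \<and> j \<le> q}"
  proof -
    have *: "i = k \<and> j = l" if a: "1 \<le> i" "i \<le> j" "j \<le> q" "1 \<le> k" "k \<le> l" "l \<le> q"
      "tau q i * tau q j = (tau q k * tau q l :: 'k perm_poly)" for i j k l
  proof -
    from a have "mon q i + mon q j = 0 + (mon q k + mon q l)" unfolding tau_mult using single1_inj by auto
    then have "(i = k \<and> j = l) \<or> (i = l \<and> j = k)" using pair_ne[of i q j k l 0] a by auto
    then show "i = k \<and> j = l" using a by auto
  qed
  show ?thesis unfolding inj_on_def using * by auto
  qed
  then have "card ((\<lambda>(i,j). tau q i * tau q j :: 'k perm_poly) ` {(i, j). 1 \<le> i \<and> i \<le> j \<and> j \<le> q}) = card {(i, j). 1 \<le> i \<and> i \<le> j \<and> j \<le> q}"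
    by (rule card_image)
  then show ?thesis unfolding G2_eq card_pairs .
qed



theorem lemma4p3:
  fixes q :: nat
  assumes "q \<ge> 1"
  shows "minimally_generates q (tau q ` {1..q}) (perm_ideal q :: 'k::field perm_poly set)
       \<and> minimally_generates q {tau q i * tau q j | i j. 1 \<le> i \<and> i \<le> j \<and> j \<le> q}
            (ideal_mult q (perm_ideal q) (perm_ideal q) :: 'k::field perm_poly set)
       \<and> card ({tau q i * tau q j | i j. 1 \<le> i \<and> i \<le> j \<and> j \<le> q} :: 'k::field perm_poly set)
            = (q choose 2) + q"
  by (intro conjI part_a[OF assms] part_b[OF assms] part_c)


end
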